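(* Let $X$ be a real vector space, $n\ge 2$, and let $(\cdot,\cdot\mid\cdot,\ldots,\cdot)$ be a weak $n$-inner product on $X$. Fix $x_2,\ldots,x_n\in X$, let $Y=\mathrm{span}\{x_2,\ldots,x_n\}$ and let $X/Y=\{\hat x: x\in X\}$ be the quotient space, where $\hat x=\{u\in X: u-x\in Y\}$. Then the function $\psi:(X/Y)^2\to\mathbb{R}$, $\psi(\hat x,\hat y):=(x,y\mid x_n,\ldots,x_2)$, is well defined and is a semi-inner product on $X/Y$. Moreover, if $x_2,\ldots,x_n$ are linearly independent, then $\psi$ is an inner product on $X/Y$.
   Context: A weak $n$-inner product ($n\ge2$) on a real vector space $X$ is a function $(\cdot,\cdot\mid\cdot,\ldots,\cdot):X^{n+1}\to\mathbb{R}$, written $(x,y\mid x_n,\ldots,x_2)$, such that for all $x,x',y,x_2,\ldots,x_n\in X$ and $\alpha\in\mathbb{R}$: (P1) $(x,x\mid x_n,\ldots,x_2)\ge 0$, with equality if and only if $x,x_2,\ldots,x_n$ are linearly dependent; (P2) $(x,x\mid x_n,\ldots,x_2)=(x_n,x_n\mid x,x_{n-1},\ldots,x_2)$; (P3) $(x,y\mid x_n,\ldots,x_2)=(y,x\mid x_n,\ldots,x_2)$; (P4) $(\alpha x,y\mid x_n,\ldots,x_2)=\alpha(x,y\mid x_n,\ldots,x_2)$; (P5) $(x+x',y\mid x_n,\ldots,x_2)=(x,y\mid x_n,\ldots,x_2)+(x',y\mid x_n,\ldots,x_2)$. A semi-inner product is a symmetric bilinear form $\psi$ with $\psi(v,v)\ge0$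 for all $v$. *)

theory Defs
  imports "HOL-Analysis.Analysis"
begin

text \<open>A finite family (given as a list) is linearly dependent if some nontrivial
  linear combination of its members vanishes (repetitions count separately).\<close>
definition lin_dep_list :: "'a::real_vector list \<Rightarrow> bool" where
  "lin_dep_list vs \<longleftrightarrow>
     (\<exists>c::nat \<Rightarrow> real. (\<exists>i<length vs. c i \<noteq> 0) \<and> (\<Sum>i<length vs. c i *\<^sub>R vs ! i) = 0)"

text \<open>Weak n-inner product. The value (x,y | x_n,...,x_2) is written f x y [x_n,...,x_2];
  the list of conditioning vectors has length n-1.\<close>
definition weak_n_inner :: "nat \<Rightarrow> ('a::real_vector \<Rightarrow> 'a \<Rightarrow> 'a list \<Rightarrow> real) \<Rightarrow> bool" where
  "weak_n_inner n f \<longleftrightarrow>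
    (\<forall>x zs. length zs = n - 1 \<longrightarrow>
        f x x zs \<ge> 0 \<and> (f x x zs = 0 \<longleftrightarrow> lin_dep_list (x # rev zs))) \<and>
    (\<forall>x z zs. length (z # zs) = n - 1 \<longrightarrow> f x x (z # zs) = f z z (x # zs)) \<and>
    (\<forall>x y zs. length zs = n - 1 \<longrightarrow> f x y zs = f y x zs) \<and>
    (\<forall>a x y zs. length zs = n - 1 \<longrightarrow> f (a *\<^sub>R x) y zs = a * f x y zs) \<and>
    (\<forall>x x' y zs. length zs = n - 1 \<longrightarrow> f (x + x') y zs = f x y zs + f x' y zs)"

definition coset :: "'a::real_vector set \<Rightarrow> 'a \<Rightarrow> 'a set" where
  "coset Y x = {u. u - x \<in> Y}"

definition quot :: "'a::real_vector set \<Rightarrow> 'a set set" where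
  "quot Y = range (coset Y)"

definition qadd :: "'a::real_vector set \<Rightarrow> 'a set \<Rightarrow> 'a set \<Rightarrow> 'a set" where
  "qadd Y A B = coset Y ((SOME a. a \<in> A) + (SOME b. b \<in> B))"

definition qscale :: "'a::real_vector set \<Rightarrow> real \<Rightarrow> 'a set \<Rightarrow> 'a set" where
  "qscale Y r A = coset Y (r *\<^sub>R (SOME a. a \<in> A))"

definition semi_inner_on ::
  "'v set \<Rightarrow> ('v \<Rightarrow> 'v \<Rightarrow> 'v) \<Rightarrow> (real \<Rightarrow> 'v \<Rightarrow> 'v) \<Rightarrow> ('v \<Rightarrow> 'v \<Rightarrow> real) \<Rightarrow> bool" where
  "semi_inner_on V add scl \<psi> \<longleftrightarrow>
    (\<forall>u\<in>V. \<forall>v\<in>V. \<psi> u v = \<psi> v u) \<and>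
    (\<forall>u\<in>V. \<forall>u'\<in>V. \<forall>v\<in>V. \<psi> (add u u') v = \<psi> u v + \<psi> u' v) \<and>
    (\<forall>a. \<forall>u\<in>V. \<forall>v\<in>V. \<psi> (scl a u) v = a * \<psi> u v) \<and>
    (\<forall>v\<in>V. \<psi> v v \<ge> 0)"

definition inner_prod_on ::
  "'v set \<Rightarrow> ('v \<Rightarrow> 'v \<Rightarrow> 'v) \<Rightarrow> (real \<Rightarrow> 'v \<Rightarrow> 'v) \<Rightarrow> 'v \<Rightarrow> ('v \<Rightarrow> 'v \<Rightarrow> real) \<Rightarrow> bool" where
  "inner_prod_on V add scl z \<psi> \<longleftrightarrow>
    semi_inner_on V add scl \<psi> \<and> (\<forall>v\<in>V. \<psi> v v = 0 \<longrightarrow> v = z)"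

end

theory Submission
  imports Defs
begin

lemma span_list_coeffs:
  fixes zs :: "'a::real_vector list"
  assumes "x \<in> span (set zs)"
  shows "\<exists>c. x = (\<Sum>i<length zs. c i *\<^sub>R zs ! i)"
  using assms
proof (induction zs arbitrary: x)
  case Nil
  then show ?case by simp
next
  case (Cons z zs)
  from Cons.prems obtain k where k: "x - k *\<^sub>R z \<in> span (set zs)"
    by (auto simp: span_insert)
  from Cons.IH[OF k] obtain c where c: "x - k *\<^sub>R z = (\<Sum>i<length zs. c i *\<^sub>R zs ! i)" by blast
  define d where "d i = (case i of 0 \<Rightarrow> k | Suc j \<Rightarrow> c j)" for i
  have "(\<Sum>i<length (z # zs). d i *\<^sub>R (z # zs) ! i) = k *\<^sub>R z + (\<Sum>i<length zs. c i *\<^sub>R zs ! i)"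
    unfolding length_Cons sum.lessThan_Suc_shift by (simp add: d_def)
  then show ?case using c[symmetric] by (intro exI[of _ d]) simp
qed

lemma span_lin_dep:
  fixes zs :: "'a::real_vector list"
  assumes "x \<in> span (set zs)"
  shows "lin_dep_list (x # rev zs)"
proof -
  have "x \<in> span (set (rev zs))" using assms by simp
  from span_list_coeffs[OF this] obtain c where c: "x = (\<Sum>i<length (rev zs). c i *\<^sub>R rev zs ! i)" by blast
  define d where "d i = (case i of 0 \<Rightarrow> -1 | Suc j \<Rightarrow> c j)" for i
  have "(\<Sum>i<length (x # rev zs). d i *\<^sub>R (x # rev zs) ! i) = - x + (\<Sum>i<length (rev zs). c i *\<^sub>R rev zs ! i)"
    unfolding length_Cons sum.lessThan_Suc_shift by (simp add: d_def)
  also have "\<dots> = 0" using c by simp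
  finally show ?thesis unfolding lin_dep_list_def
    by (intro exI[of _ d]) (auto simp: d_def)
qed

lemma lin_dep_span:
  fixes zs :: "'a::real_vector list"
  assumes "lin_dep_list (x # rev zs)" and "\<not> lin_dep_list zs"
  shows "x \<in> span (set zs)"
proof -
  obtain c where c1: "\<exists>i<length (x # rev zs). c i \<noteq> 0"
    and c2: "(\<Sum>i<length (x # rev zs). c i *\<^sub>R (x # rev zs) ! i) = 0"
    using assms(1) unfolding lin_dep_list_def by blast
  let ?L = "length zs"
  have s: "c 0 *\<^sub>R x + (\<Sum>i<?L. c (Suc i) *\<^sub>R rev zs ! i) = 0"
    using c2 unfolding length_Cons length_rev sum.lessThan_Suc_shift by simp
  have r: "(\<Sum>i<?L. c (Suc i) *\<^sub>R rev zs ! i) = (\<Sum>i<?L. c (Suc (?L - Suc i)) *\<^sub>R zs ! i)"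
  proof -
    have "(\<Sum>i<?L. c (Suc i) *\<^sub>R rev zs ! i) = (\<Sum>i<?L. c (Suc i) *\<^sub>R zs ! (?L - Suc i))"
      by (intro sum.cong) (auto simp: rev_nth)
    also have "\<dots> = (\<Sum>i<?L. (\<lambda>j. c (Suc (?L - Suc j)) *\<^sub>R zs ! j) (?L - Suc i))"
      by (intro sum.cong) (auto simp: Suc_diff_Suc)
    also have "\<dots> = (\<Sum>i<?L. c (Suc (?L - Suc i)) *\<^sub>R zs ! i)"
      by (rule sum.nat_diff_reindex)
    finally show ?thesis .
  qed
  show ?thesis
  proof (cases "c 0 = 0")
    case True
    then obtain i where i: "i < ?L" "c (Suc i) \<noteq> 0" using c1
      by (metis length_Cons length_rev less_Suc_eq_0_disj)
    have "lin_dep_list zs" unfolding lin_dep_list_def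
    proof (intro exI[of _ "\<lambda>j. c (Suc (?L - Suc j))"] conjI)
      show "\<exists>j<?L. c (Suc (?L - Suc j)) \<noteq> 0"
        using i by (intro exI[of _ "?L - Suc i"]) auto
      show "(\<Sum>j<?L. c (Suc (?L - Suc j)) *\<^sub>R zs ! j) = 0" using s r True by simp
    qed
    with assms(2) show ?thesis by blast
  next
    case False
    have e: "- (c 0 *\<^sub>R x) = (\<Sum>i<?L. c (Suc i) *\<^sub>R rev zs ! i)"
      by (subst neg_eq_iff_add_eq_0) (rule s)
    have "x = (- 1 / c 0) *\<^sub>R (\<Sum>i<?L. c (Suc i) *\<^sub>R rev zs ! i)"
      unfolding e[symmetric] using False by simp
    also have "\<dots> \<in> span (set zs)"
      by (intro span_scale span_sum span_base) (auto simp: rev_nth)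
    finally show ?thesis .
  qed
qed


lemma wni_zero:
  fixes f :: "'a::real_vector \<Rightarrow> 'a \<Rightarrow> 'a list \<Rightarrow> real"
  assumes W: "weak_n_inner n f" and L: "length zs = n - 1" and w: "w \<in> span (set zs)"
  shows "f w y zs = 0"
proof -
  have pos: "\<And>x. f x x zs \<ge> 0" and sym: "\<And>x y. f x y zs = f y x zs"
    and scl: "\<And>a x y. f (a *\<^sub>R x) y zs = a * f x y zs"
    and add: "\<And>x x' y. f (x + x') y zs = f x y zs + f x' y zs"
    using W L unfolding weak_n_inner_def by auto
  have ww: "f w w zs = 0"
    using W L span_lin_dep[OF w] unfolding weak_n_inner_def by blast
  define a where "a = f w y zs"
  define b where "b = f y y zs"
  have b0: "b \<ge> 0" using pos b_def by simp
  define t where "t = - a / (b + 1)"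
  have exp: "f (w + t *\<^sub>R y) (w + t *\<^sub>R y) zs = 2 * t * a + t^2 * b"
  proof -
    have e1: "f (w + t *\<^sub>R y) (w + t *\<^sub>R y) zs = f w (w + t *\<^sub>R y) zs + t * f y (w + t *\<^sub>R y) zs"
      by (simp only: add scl)
    have e2: "f w (w + t *\<^sub>R y) zs = f w w zs + t * f y w zs"
      by (subst sym) (simp only: add scl)
    have e3: "f y (w + t *\<^sub>R y) zs = f w y zs + t * f y y zs"
      by (subst sym) (simp only: add scl)
    have "f (w + t *\<^sub>R y) (w + t *\<^sub>R y) zs
        = f w w zs + t * f y w zs + t * (f w y zs + t * f y y zs)"
      using e1 e2 e3 by simp
    then show ?thesis using ww sym[of y w] a_def b_def by (simp add: power2_eq_square algebra_simps)
  qed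
  have "0 \<le> 2 * t * a + t^2 * b" using pos exp by metis
  also have "2 * t * a + t^2 * b = a^2 * (- b - 2) / (b + 1)^2"
    using b0 unfolding t_def by (simp add: field_simps power2_eq_square add_nonneg_eq_0_iff)
  finally have "0 \<le> a^2 * (- b - 2) / (b + 1)^2" .
  moreover have "a \<noteq> 0 \<Longrightarrow> a^2 * (- b - 2) / (b + 1)^2 < 0"
    using b0 by (intro divide_neg_pos mult_pos_neg) auto
  ultimately show ?thesis unfolding a_def by fastforce
qed


theorem theorem2p1:
  fixes f :: "'a::real_vector \<Rightarrow> 'a \<Rightarrow> 'a list \<Rightarrow> real"
    and n :: nat and xs :: "'a list"
  assumes "n \<ge> 2" and "weak_n_inner n f" and "length xs = n - 1"
  shows "\<exists>\<psi>. (\<forall>x y. \<psi> (coset (span (set xs)) x) (coset (span (set xs)) y) = f x y xs) \<and>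
             semi_inner_on (quot (span (set xs))) (qadd (span (set xs))) (qscale (span (set xs))) \<psi> \<and>
             (\<not> lin_dep_list xs \<longrightarrow>
                inner_prod_on (quot (span (set xs))) (qadd (span (set xs))) (qscale (span (set xs)))
                  (coset (span (set xs)) 0) \<psi>)"
proof -
  define Y where "Y = span (set xs)"
  have W: "weak_n_inner n f" and L: "length xs = n - 1" using assms by auto
  have pos: "\<And>x. f x x xs \<ge> 0" and sym: "\<And>x y. f x y xs = f y x xs"
    and scl: "\<And>a x y. f (a *\<^sub>R x) y xs = a * f x y xs"
    and add: "\<And>x x' y. f (x + x') y xs = f x y xs + f x' y xs"
    and P1: "\<And>x. f x x xs = 0 \<longleftrightarrow> lin_dep_list (x # rev xs)"
    using W L unfolding weak_n_inner_def by auto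
  have z: "\<And>w y. w \<in> Y \<Longrightarrow> f w y xs = 0" using wni_zero[OF W L] Y_def by blast
  have wd1: "f a b xs = f x b xs" if "a - x \<in> Y" for a b x
  proof -
    have "f a b xs = f (x + (a - x)) b xs" by simp
    also have "\<dots> = f x b xs" by (simp only: add z[OF that] add_0_right)
    finally show ?thesis .
  qed
  have wd: "f a b xs = f x y xs" if "a - x \<in> Y" "b - y \<in> Y" for a b x y
    using wd1[OF that(1)] wd1[OF that(2)] sym by metis
  have some: "(SOME a. a \<in> coset Y x) - x \<in> Y" for x
  proof -
    have "x \<in> coset Y x" unfolding coset_def Y_def by (simp add: span_zero)
    then have "(SOME a. a \<in> coset Y x) \<in> coset Y x" by (rule someI)
    then show ?thesis unfolding coset_def by simp
  qed
  define \<psi> where "\<psi> A B = f (SOME a. a \<in> A) (SOME b. b \<in> B) xs" for A B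
  have psi: "\<psi> (coset Y x) (coset Y y) = f x y xs" for x y
    unfolding \<psi>_def by (rule wd[OF some some])
  have Q: "u \<in> quot Y \<Longrightarrow> \<exists>x. u = coset Y x" for u unfolding quot_def by auto
  have semi: "semi_inner_on (quot Y) (qadd Y) (qscale Y) \<psi>"
    unfolding semi_inner_on_def
  proof (intro conjI ballI allI)
    fix u v assume "u \<in> quot Y" "v \<in> quot Y"
    then obtain x y where "u = coset Y x" "v = coset Y y" using Q by blast
    then show "\<psi> u v = \<psi> v u" using psi sym by simp
  next
    fix u u' v assume "u \<in> quot Y" "u' \<in> quot Y" "v \<in> quot Y"
    then obtain x x' y where xx: "u = coset Y x" "u' = coset Y x'" "v = coset Y y" using Q by metis
    have "\<psi> (qadd Y u u') v = f ((SOME a. a \<in> u) + (SOME b. b \<in> u')) y xs"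
      unfolding qadd_def xx(3) psi ..
    also have "\<dots> = f x y xs + f x' y xs"
      unfolding add xx using wd[OF some, of y y] by (simp add: span_zero Y_def)
    finally show "\<psi> (qadd Y u u') v = \<psi> u v + \<psi> u' v" using xx psi by simp
  next
    fix r u v assume "u \<in> quot Y" "v \<in> quot Y"
    then obtain x y where xx: "u = coset Y x" "v = coset Y y" using Q by metis
    have "\<psi> (qscale Y r u) v = f (r *\<^sub>R (SOME a. a \<in> u)) y xs"
      unfolding qscale_def xx(2) psi ..
    also have "\<dots> = r * f x y xs"
      unfolding scl xx using wd[OF some, of y y] by (simp add: span_zero Y_def)
    finally show "\<psi> (qscale Y r u) v = r * \<psi> u v" using xx psi by simp
  next
    fix v assume "v \<in> quot Y"
    then obtain x where "v = coset Y x" using Q by blast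
    then show "\<psi> v v \<ge> 0" using psi pos by simp
  qed
  have inner: "inner_prod_on (quot Y) (qadd Y) (qscale Y) (coset Y 0) \<psi>" if ind: "\<not> lin_dep_list xs"
    unfolding inner_prod_on_def
  proof (intro conjI ballI impI semi)
    fix v assume "v \<in> quot Y" "\<psi> v v = 0"
    then obtain x where xv: "v = coset Y x" "f x x xs = 0" using Q psi by metis
    then have "x \<in> Y" using lin_dep_span[OF _ ind] P1 Y_def by blast
    then have "coset Y x = coset Y 0" unfolding coset_def Y_def
      by (auto intro: span_diff span_add dest: span_add[of _ _ x] span_diff[of _ _ x])
    then show "v = coset Y 0" using xv by simp
  qed
  show ?thesis unfolding Y_def[symmetric]
    using psi semi inner by blast
qed

end
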